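(* Let $\tilde T>0$ and $T=\tilde T D^{-\alpha}$. Let $K=\Phi(\mathcal C)$ and $N_T=\sum_{\mathsf x_i\in\Phi\cap\mathcal C}\mathbf 1(\mathsf g_i\|\mathsf x_i\|^{-\alpha}\ge T)$, and define the average radio resource saving $\Delta=1-\mathbb E\big[N_T/K\,\big|\,K\ge1\big]$. Then $$\Delta=1-\mathbb E\Big[\min\big\{1,\tilde T^{-\frac2\alpha}\mathsf g^{\frac2\alpha}\big\}\Big],$$ which in particular does not depend on $\lambda$. If moreover $\mathsf g$ is exponentially distributed with mean $1$, then $\Delta=1-e^{-\tilde T}-\tilde T^{-\frac2\alpha}\gamma\big(1+\tfrac2\alpha,\tilde T\big)$.
   Context: $\Phi=\{\mathsf x_i\}$ is a homogeneous Poisson point process on $\mathbb R^2$ with density $\lambda>0$, with i.i.d. marks $\mathsf g_i\ge0$ (distributed as $\mathsf g$) independent of $\Phi$, $\mathbb E[\mathsf g]=1$. Fix $\alpha>2$, $D>0$; $\mathcal C=b(o,D)$ is the disk of radius $D$ centered at the origin and $\Phi(\mathcal C)$ the number of points of $\Phi$ in $\mathcal C$. $\gamma(a,x)=\int_0^x t^{a-1}e^{-t}dt$ is the lower incomplete Gamma function. *)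

theory Defs
  imports "HOL-Probability.Probability"
begin

text \<open>A marked point is ((x1,x2), g).  A homogeneous marked Poisson point process with
  intensity lam and i.i.d. marks of law Q independent of the ground process is (marking
  theorem) a Poisson point process on the product space with intensity measure
  lam * (Lebesgue (x) Q).\<close>

definition marked_ppp ::
  "'w measure \<Rightarrow> ('w \<Rightarrow> ((real \<times> real) \<times> real) set) \<Rightarrow> real \<Rightarrow> real measure \<Rightarrow> bool" where
  "marked_ppp M Psi lam Q \<longleftrightarrow>
     prob_space M \<and>
     (\<forall>\<omega>\<in>space M. \<forall>B. bounded B \<longrightarrow> finite (Psi \<omega> \<inter> (B \<times> UNIV))) \<and>
     (\<forall>A. A \<in> sets (lborel \<Otimes>\<^sub>M Q) \<and> bounded (fst ` A) \<longrightarrow>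
        (\<lambda>\<omega>. card (Psi \<omega> \<inter> A)) \<in> measurable M (count_space UNIV) \<and>
        (\<forall>k::nat. measure M {\<omega>\<in>space M. card (Psi \<omega> \<inter> A) = k} =
           (lam * measure (lborel \<Otimes>\<^sub>M Q) A) ^ k / fact k
             * exp (- (lam * measure (lborel \<Otimes>\<^sub>M Q) A)))) \<and>
     (\<forall>(I::nat set) F. finite I \<longrightarrow>
        (\<forall>i\<in>I. F i \<in> sets (lborel \<Otimes>\<^sub>M Q) \<and> bounded (fst ` F i)) \<longrightarrow>
        disjoint_family_on F I \<longrightarrow>
        prob_space.indep_vars M (\<lambda>_. count_space UNIV) (\<lambda>i \<omega>. card (Psi \<omega> \<inter> F i)) I)"

definition lower_inc_gamma :: "real \<Rightarrow> real \<Rightarrow> real" where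
  "lower_inc_gamma a x = (LBINT t=0..x. t powr (a - 1) * exp (- t))"

definition count_K :: "('w \<Rightarrow> ((real \<times> real) \<times> real) set) \<Rightarrow> real \<Rightarrow> 'w \<Rightarrow> nat" where
  "count_K Psi D \<omega> = card {p \<in> Psi \<omega>. fst p \<in> ball 0 D}"

definition count_N :: "('w \<Rightarrow> ((real \<times> real) \<times> real) set) \<Rightarrow> real \<Rightarrow> real \<Rightarrow> real \<Rightarrow> 'w \<Rightarrow> nat" where
  "count_N Psi D alpha T \<omega> =
     card {p \<in> Psi \<omega>. fst p \<in> ball 0 D \<and> snd p * norm (fst p) powr (- alpha) \<ge> T}"

definition saving :: "'w measure \<Rightarrow> ('w \<Rightarrow> ((real \<times> real) \<times> real) set) \<Rightarrow> real \<Rightarrow> real \<Rightarrow> real \<Rightarrow> real" where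
  "saving M Psi D alpha T =
     1 - (\<integral>\<omega>. (if count_K Psi D \<omega> \<ge> 1
                 then real (count_N Psi D alpha T \<omega>) / real (count_K Psi D \<omega>) else 0) \<partial>M)
         / measure M {\<omega>\<in>space M. count_K Psi D \<omega> \<ge> 1}"

end

theory Submission
  imports Defs
begin


lemma suminf_single_ennreal: "(\<Sum>n. if n = i then (c n::ennreal) else 0) = c i"
  by (rule sums_unique[symmetric]) (rule sums_single)

lemma disc_integral:
  fixes X Y :: "'w \<Rightarrow> nat" and f :: "nat \<Rightarrow> nat \<Rightarrow> ennreal"
  assumes P: "prob_space M"
    and X: "X \<in> measurable M (count_space UNIV)" and Y: "Y \<in> measurable M (count_space UNIV)"
    and ind: "\<And>n m. measure M {\<omega>\<in>space M. X \<omega> = n \<and> Y \<omega> = m}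
        = measure M {\<omega>\<in>space M. X \<omega> = n} * measure M {\<omega>\<in>space M. Y \<omega> = m}"
  shows "(\<integral>\<^sup>+\<omega>. f (X \<omega>) (Y \<omega>) \<partial>M) = (\<Sum>m. \<Sum>n. f n m * ennreal (measure M {\<omega>\<in>space M. X \<omega> = n}) * ennreal (measure M {\<omega>\<in>space M. Y \<omega> = m}))"
proof -
  interpret prob_space M by fact
  define S where "S n m = {\<omega>\<in>space M. X \<omega> = n \<and> Y \<omega> = m}" for n m
  have Smeas: "S n m \<in> sets M" for n m
  proof -
    have "S n m = (X -` {n} \<inter> space M) \<inter> (Y -` {m} \<inter> space M)" by (auto simp: S_def)
    moreover have "X -` {n} \<inter> space M \<in> sets M" using X by (rule measurable_sets) auto
    moreover have "Y -` {m} \<inter> space M \<in> sets M" using Y by (rule measurable_sets) auto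
    ultimately show ?thesis by auto
  qed
  have eq: "f (X \<omega>) (Y \<omega>) = (\<Sum>m. \<Sum>n. f n m * indicator (S n m) \<omega>)" if "\<omega> \<in> space M" for \<omega>
  proof -
    have "(\<Sum>n. f n m * indicator (S n m) \<omega>) = (if m = Y \<omega> then f (X \<omega>) m else 0)" for m
    proof -
      have "(\<lambda>n. f n m * indicator (S n m) \<omega>) = (\<lambda>n. if n = X \<omega> then (if m = Y \<omega> then f (X \<omega>) m else 0) else 0)"
        using that by (auto simp: S_def indicator_def)
      then show ?thesis by (simp add: suminf_single_ennreal)
    qed
    then show ?thesis using suminf_single_ennreal[of "Y \<omega>" "\<lambda>m. f (X \<omega>) m"] by simp
  qed
  have "(\<integral>\<^sup>+\<omega>. f (X \<omega>) (Y \<omega>) \<partial>M) = (\<integral>\<^sup>+\<omega>. (\<Sum>m. \<Sum>n. f n m * indicator (S n m) \<omega>) \<partial>M)"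
    by (rule nn_integral_cong) (simp add: eq)
  also have "\<dots> = (\<Sum>m. \<integral>\<^sup>+\<omega>. (\<Sum>n. f n m * indicator (S n m) \<omega>) \<partial>M)"
    by (rule nn_integral_suminf) (use Smeas in auto)
  also have "\<dots> = (\<Sum>m. \<Sum>n. \<integral>\<^sup>+\<omega>. f n m * indicator (S n m) \<omega> \<partial>M)"
    by (intro suminf_cong nn_integral_suminf) (use Smeas in auto)
  also have "\<dots> = (\<Sum>m. \<Sum>n. f n m * ennreal (measure M {\<omega>\<in>space M. X \<omega> = n}) * ennreal (measure M {\<omega>\<in>space M. Y \<omega> = m}))"
  proof (intro suminf_cong)
    fix m n
    have "(\<integral>\<^sup>+\<omega>. f n m * indicator (S n m) \<omega> \<partial>M) = f n m * emeasure M (S n m)"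
      using Smeas by (rule nn_integral_cmult_indicator)
    also have "emeasure M (S n m) = ennreal (measure M {\<omega>\<in>space M. X \<omega> = n}) * ennreal (measure M {\<omega>\<in>space M. Y \<omega> = m})"
      by (simp add: emeasure_eq_measure S_def ind ennreal_mult)
    finally show "(\<integral>\<^sup>+\<omega>. f n m * indicator (S n m) \<omega> \<partial>M) = f n m * ennreal (measure M {\<omega>\<in>space M. X \<omega> = n}) * ennreal (measure M {\<omega>\<in>space M. Y \<omega> = m})"
      by (simp add: mult.assoc)
  qed
  finally show ?thesis .
qed

lemma aux_cancel: "x \<ge> 0 \<Longrightarrow> y \<ge> 0 \<Longrightarrow> (x+1)/(x+1+y) * (a/(x+1)*p) = a*p/(x+1+(y::real))"
  by (simp add: divide_simps)

definition ppois :: "real \<Rightarrow> nat \<Rightarrow> real" where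
  "ppois a n = a ^ n / fact n * exp (- a)"

lemma size_bias:
  assumes "a \<ge> 0"
  shows "(\<Sum>n. ennreal (real n / real (n + m)) * ennreal (ppois a n))
       = ennreal a * (\<Sum>n. ennreal (1 / real (n + m + 1)) * ennreal (ppois a n))"
proof -
  let ?F = "\<lambda>n. ennreal (real n / real (n + m)) * ennreal (ppois a n)"
  have "suminf ?F = (\<Sum>j. ?F (j + 1)) + (\<Sum>j<1. ?F j)"
    by (rule suminf_offset) simp
  also have "(\<Sum>j<1. ?F j) = 0" by simp
  also have "(\<lambda>j. ?F (j + 1)) = (\<lambda>j. ennreal a * (ennreal (1 / real (j + m + 1)) * ennreal (ppois a j)))"
  proof
    fix j
    have "real (j + 1) / real (j + 1 + m) * ppois a (j + 1) = a * (1 / real (j + m + 1) * ppois a j)"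
    proof -
      have f: "ppois a (j + 1) = a / real (j + 1) * ppois a j"
        by (simp add: ppois_def fact_Suc field_simps)
      show ?thesis unfolding f using aux_cancel[of "real j" "real m" a "ppois a j"] by (simp add: ac_simps)
    qed
    then show "?F (j + 1) = ennreal a * (ennreal (1 / real (j + m + 1)) * ennreal (ppois a j))"
      using assms by (simp add: ennreal_mult[symmetric] ppois_def)
  qed
  finally show ?thesis by simp
qed

lemma pois_ratio:
  fixes X Y :: "'w \<Rightarrow> nat"
  assumes P: "prob_space M"
    and X: "X \<in> measurable M (count_space UNIV)" and Y: "Y \<in> measurable M (count_space UNIV)"
    and ind: "\<And>n m. measure M {\<omega>\<in>space M. X \<omega> = n \<and> Y \<omega> = m}
        = measure M {\<omega>\<in>space M. X \<omega> = n} * measure M {\<omega>\<in>space M. Y \<omega> = m}"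
    and pX: "\<And>n. measure M {\<omega>\<in>space M. X \<omega> = n} = ppois a n"
    and pY: "\<And>n. measure M {\<omega>\<in>space M. Y \<omega> = n} = ppois b n"
    and a: "a \<ge> 0" and b: "b \<ge> 0" and ab: "a + b > 0"
  shows "(\<integral>\<^sup>+\<omega>. ennreal (real (X \<omega>) / real (X \<omega> + Y \<omega>)) \<partial>M)
      = ennreal (a / (a + b) * (1 - exp (- (a + b))))"
proof -
  interpret prob_space M by fact
  note [measurable] = X Y
  have indYX: "\<And>n m. measure M {\<omega>\<in>space M. Y \<omega> = n \<and> X \<omega> = m}
        = measure M {\<omega>\<in>space M. Y \<omega> = n} * measure M {\<omega>\<in>space M. X \<omega> = m}"
    using ind by (simp add: conj_commute mult.commute)
  define c where "c = (\<integral>\<^sup>+\<omega>. ennreal (1 / real (X \<omega> + Y \<omega> + 1)) \<partial>M)"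
  have c2: "c = (\<integral>\<^sup>+\<omega>. ennreal (1 / real (Y \<omega> + X \<omega> + 1)) \<partial>M)"
    unfolding c_def by (simp add: add.commute)
  have E1: "(\<integral>\<^sup>+\<omega>. ennreal (real (X \<omega>) / real (X \<omega> + Y \<omega>)) \<partial>M) = ennreal a * c"
  proof -
    have "(\<integral>\<^sup>+\<omega>. ennreal (real (X \<omega>) / real (X \<omega> + Y \<omega>)) \<partial>M)
       = (\<Sum>m. (\<Sum>n. ennreal (real n / real (n + m)) * ennreal (ppois a n)) * ennreal (ppois b m))"
      using disc_integral[OF P X Y ind, of "\<lambda>n m. ennreal (real n / real (n + m))"] by (simp add: pX pY)
    also have "\<dots> = (\<Sum>m. ennreal a * ((\<Sum>n. ennreal (1 / real (n + m + 1)) * ennreal (ppois a n)) * ennreal (ppois b m)))"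
      unfolding size_bias[OF a] by (simp only: mult.assoc)
    also have "\<dots> = ennreal a * c"
      unfolding c_def using disc_integral[OF P X Y ind, of "\<lambda>n m. ennreal (1 / real (n + m + 1))"]
      by (simp add: pX pY)
    finally show ?thesis .
  qed
  have E2: "(\<integral>\<^sup>+\<omega>. ennreal (real (Y \<omega>) / real (X \<omega> + Y \<omega>)) \<partial>M) = ennreal b * c"
  proof -
    have "(\<integral>\<^sup>+\<omega>. ennreal (real (Y \<omega>) / real (X \<omega> + Y \<omega>)) \<partial>M)
       = (\<integral>\<^sup>+\<omega>. ennreal (real (Y \<omega>) / real (Y \<omega> + X \<omega>)) \<partial>M)"
      by (simp add: add.commute)
    also have "\<dots> = (\<Sum>m. (\<Sum>n. ennreal (real n / real (n + m)) * ennreal (ppois b n)) * ennreal (ppois a m))"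
      using disc_integral[OF P Y X indYX, of "\<lambda>n m. ennreal (real n / real (n + m))"] by (simp add: pX pY)
    also have "\<dots> = (\<Sum>m. ennreal b * ((\<Sum>n. ennreal (1 / real (n + m + 1)) * ennreal (ppois b n)) * ennreal (ppois a m)))"
      unfolding size_bias[OF b] by (simp only: mult.assoc)
    also have "\<dots> = ennreal b * c"
      unfolding c2 using disc_integral[OF P Y X indYX, of "\<lambda>n m. ennreal (1 / real (n + m + 1))"]
      by (simp add: pX pY)
    finally show ?thesis .
  qed
  define Z where "Z = {\<omega>\<in>space M. X \<omega> = 0 \<and> Y \<omega> = 0}"
  have Zs: "Z \<in> sets M" unfolding Z_def by measurable
  have "(\<integral>\<^sup>+\<omega>. ennreal (real (X \<omega>) / real (X \<omega> + Y \<omega>)) \<partial>M)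
      + (\<integral>\<^sup>+\<omega>. ennreal (real (Y \<omega>) / real (X \<omega> + Y \<omega>)) \<partial>M)
      = (\<integral>\<^sup>+\<omega>. ennreal (real (X \<omega>) / real (X \<omega> + Y \<omega>)) + ennreal (real (Y \<omega>) / real (X \<omega> + Y \<omega>)) \<partial>M)"
    by (rule nn_integral_add[symmetric]) measurable
  also have "\<dots> = (\<integral>\<^sup>+\<omega>. indicator (space M - Z) \<omega> \<partial>M)"
  proof (rule nn_integral_cong)
    fix \<omega> assume w: "\<omega> \<in> space M"
    show "ennreal (real (X \<omega>) / real (X \<omega> + Y \<omega>)) + ennreal (real (Y \<omega>) / real (X \<omega> + Y \<omega>)) = indicator (space M - Z) \<omega>"
    proof (cases "X \<omega> + Y \<omega> = 0")
      case True then show ?thesis using w by (simp add: Z_def)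
    next
      case False
      then have nz: "real (X \<omega> + Y \<omega>) \<noteq> 0" by linarith
      have "real (X \<omega>) / real (X \<omega> + Y \<omega>) + real (Y \<omega>) / real (X \<omega> + Y \<omega>) = 1"
        using nz by (simp only: add_divide_distrib[symmetric] of_nat_add[symmetric]) simp
      then show ?thesis using w False
        by (simp add: Z_def ennreal_plus[symmetric] del: ennreal_plus)
    qed
  qed
  also have "\<dots> = emeasure M (space M - Z)" using Zs by simp
  also have "\<dots> = ennreal (1 - exp (- a) * exp (- b))"
  proof -
    have "measure M Z = ppois a 0 * ppois b 0" unfolding Z_def using ind pX pY by simp
    then have "measure M Z = exp (- a) * exp (- b)" by (simp add: ppois_def)
    then show ?thesis using Zs by (simp add: emeasure_eq_measure prob_compl)
  qed
  finally have sum: "ennreal a * c + ennreal b * c = ennreal (1 - exp (- (a + b)))"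
    using E1 E2 by (simp add: exp_add[symmetric])
  have "c \<le> (\<integral>\<^sup>+\<omega>. 1 \<partial>M)" unfolding c_def by (rule nn_integral_mono) simp
  then have "c \<le> 1" by (simp add: emeasure_space_1)
  then obtain c' where c': "c = ennreal c'" "c' \<ge> 0"
    by (metis ennreal_cases ennreal_one_neq_top neq_top_trans)
  have "ennreal ((a + b) * c') = ennreal (1 - exp (- (a + b)))"
    using sum a b c' by (simp add: ennreal_mult[symmetric] ennreal_plus[symmetric] distrib_right del: ennreal_plus)
  then have "(a + b) * c' = 1 - exp (- (a + b))"
    using a b c' ab by (subst (asm) ennreal_inj) auto
  then have "a / (a + b) * (1 - exp (- (a + b))) = a / (a + b) * ((a + b) * c')" by simp
  also have "\<dots> = a * c'" using ab by simp
  finally have "a * c' = a / (a + b) * (1 - exp (- (a + b)))" by simp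
  then show ?thesis using E1 c' a by (simp add: ennreal_mult[symmetric])
qed



lemma powr_le_iff_pos:
  fixes x y a :: real
  assumes "a > 0" "x \<ge> 0" "y \<ge> 0"
  shows "x powr a \<le> y \<longleftrightarrow> x \<le> y powr (1/a)"
proof
  assume "x powr a \<le> y"
  then have "(x powr a) powr (1/a) \<le> y powr (1/a)"
    using assms by (intro powr_mono2) auto
  then show "x \<le> y powr (1/a)" using assms by (simp add: powr_powr)
next
  assume "x \<le> y powr (1/a)"
  then have "x powr a \<le> (y powr (1/a)) powr a"
    using assms by (intro powr_mono2) auto
  then show "x powr a \<le> y" using assms by (simp add: powr_powr)
qed

lemma thr_iff:
  fixes n alpha D Tt g :: real
  assumes "alpha > 0" "D > 0" "Tt > 0" "g > 0" "n > 0"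
  shows "(Tt * D powr (- alpha) \<le> g * n powr (- alpha)) \<longleftrightarrow> n \<le> D * (g / Tt) powr (1 / alpha)"
proof -
  have "(Tt * D powr (- alpha) \<le> g * n powr (- alpha)) \<longleftrightarrow> Tt * (n / D) powr alpha \<le> g"
  proof -
    have e1: "D powr (- alpha) = inverse (D powr alpha)" "n powr (- alpha) = inverse (n powr alpha)"
      by (simp_all add: powr_minus)
    have pos: "D powr alpha > 0" "n powr alpha > 0" using assms by auto
    have "(Tt * D powr (- alpha) \<le> g * n powr (- alpha)) \<longleftrightarrow> Tt * n powr alpha \<le> g * D powr alpha"
      unfolding e1 using pos by (simp add: field_simps)
    also have "\<dots> \<longleftrightarrow> Tt * (n / D) powr alpha \<le> g"
      using pos assms by (simp add: powr_divide field_simps)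
    finally show ?thesis .
  qed
  also have "\<dots> \<longleftrightarrow> (n / D) powr alpha \<le> g / Tt" using assms by (simp add: field_simps)
  also have "\<dots> \<longleftrightarrow> n / D \<le> (g / Tt) powr (1 / alpha)"
    using assms by (intro powr_le_iff_pos) auto
  also have "\<dots> \<longleftrightarrow> n \<le> D * (g / Tt) powr (1 / alpha)" using assms by (simp add: field_simps)
  finally show ?thesis .
qed

lemma unit_ball_vol_2: "unit_ball_vol 2 = pi"
  using unit_ball_vol_even[of 1] by simp

lemma s_sq:
  fixes g Tt alpha :: real
  assumes "alpha > 0" "Tt > 0" "g > 0"
  shows "((g / Tt) powr (1 / alpha))^2 = Tt powr (- 2 / alpha) * g powr (2 / alpha)"
proof -
  have p: "(g / Tt) powr (1 / alpha) > 0" using assms by simp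
  have "((g / Tt) powr (1 / alpha))^2 = ((g / Tt) powr (1 / alpha)) powr 2"
    using powr_realpow[OF p, of 2] by simp
  also have "\<dots> = (g / Tt) powr (2 / alpha)" by (simp add: powr_powr)
  also have "\<dots> = g powr (2 / alpha) / Tt powr (2 / alpha)" using assms by (simp add: powr_divide)
  also have "\<dots> = Tt powr (- 2 / alpha) * g powr (2 / alpha)"
    by (simp add: powr_minus divide_inverse minus_divide_left)
  finally show ?thesis .
qed

lemma area:
  fixes alpha D Tt g :: real
  assumes "alpha > 0" "D > 0" "Tt > 0" "g \<ge> 0"
  shows "emeasure lborel {x::real\<times>real. x \<in> ball 0 D \<and> Tt * D powr (- alpha) \<le> g * norm x powr (- alpha)}
     = ennreal (pi * D^2 * min 1 (Tt powr (- 2 / alpha) * g powr (2 / alpha)))"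
proof (cases "g = 0")
  case True
  have "Tt * D powr (- alpha) > 0" using assms by simp
  then have E: "{x::real\<times>real. x \<in> ball 0 D \<and> Tt * D powr (- alpha) \<le> g * norm x powr (- alpha)} = {}"
    using True by (auto simp del: mem_ball)
  show ?thesis unfolding E using True by simp
next
  case False
  then have g: "g > 0" using assms by simp
  define s where "s = (g / Tt) powr (1 / alpha)"
  have s: "s > 0" using g assms by (simp add: s_def)
  have set: "{x::real\<times>real. x \<in> ball 0 D \<and> Tt * D powr (- alpha) \<le> g * norm x powr (- alpha)}
      = (ball 0 D \<inter> cball 0 (D * s)) - {0}"
  proof (rule set_eqI)
    fix x :: "real \<times> real"
    show "x \<in> {x. x \<in> ball 0 D \<and> Tt * D powr (- alpha) \<le> g * norm x powr (- alpha)} \<longleftrightarrow>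
          x \<in> (ball 0 D \<inter> cball 0 (D * s)) - {0}"
    proof (cases "x = 0")
      case True
      have "Tt * D powr (- alpha) > 0" using assms by simp
      then show ?thesis using True by auto
    next
      case False
      then have "norm x > 0" by simp
      have "(Tt * D powr (- alpha) \<le> g * norm x powr (- alpha)) \<longleftrightarrow> norm x \<le> D * s"
        unfolding s_def by (rule thr_iff[OF assms(1,2,3) g \<open>norm x > 0\<close>])
      then show ?thesis using False by (simp add: dist_norm)
    qed
  qed
  have null: "{0::real\<times>real} \<in> null_sets lborel" by (simp add: null_sets_def)
  have "emeasure lborel ((ball (0::real\<times>real) D \<inter> cball 0 (D * s)) - {0})
      = emeasure lborel (ball (0::real\<times>real) D \<inter> cball 0 (D * s))"
    by (rule emeasure_Diff_null_set[OF null]) auto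
  also have "\<dots> = ennreal (pi * (min D (D * s))^2)"
  proof (cases "s < 1")
    case True
    then have "D * s < D" using assms by simp
    then have "ball (0::real\<times>real) D \<inter> cball 0 (D * s) = cball 0 (D * s)" by auto
    then show ?thesis using s assms \<open>D * s < D\<close>
      by (simp add: emeasure_cball unit_ball_vol_2 power2_eq_square)
  next
    case False
    then have "D * s \<ge> D" using assms by simp
    then have "ball (0::real\<times>real) D \<inter> cball 0 (D * s) = ball 0 D" by auto
    then show ?thesis using s assms \<open>D * s \<ge> D\<close>
      by (simp add: emeasure_ball unit_ball_vol_2 power2_eq_square)
  qed
  also have "(min D (D * s))^2 = D^2 * min 1 (s^2)"
  proof (cases "s < 1")
    case True
    then have "s^2 < 1" using s by (simp add: power_less_one_iff)
    then show ?thesis using True assms by (simp add: power_mult_distrib)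
  next
    case False
    then have "s^2 \<ge> 1" using s by (simp add: one_le_power)
    then show ?thesis using False assms by simp
  qed
  also have "s^2 = Tt powr (- 2 / alpha) * g powr (2 / alpha)"
    unfolding s_def using assms g by (intro s_sq) auto
  finally show ?thesis using set by (simp add: mult.assoc)
qed



lemma setA_meas:
  fixes Q :: "real measure"
  assumes "sets Q = sets borel"
  shows "{p::(real\<times>real)\<times>real. fst p \<in> ball 0 D \<and> T \<le> snd p * norm (fst p) powr (- alpha)} \<in> sets (lborel \<Otimes>\<^sub>M Q)"
proof -
  have eq: "sets (lborel \<Otimes>\<^sub>M Q) = sets (borel \<Otimes>\<^sub>M (borel :: real measure) :: ((real\<times>real)\<times>real) measure)"
    by (rule sets_pair_measure_cong) (simp_all add: assms)
  have "Measurable.pred (borel \<Otimes>\<^sub>M borel) (\<lambda>p::(real\<times>real)\<times>real. norm (fst p) < D \<and> T \<le> snd p * norm (fst p) powr (- alpha))"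
    by measurable
  then have "{p \<in> space (borel \<Otimes>\<^sub>M borel). norm (fst p) < D \<and> T \<le> snd p * norm (fst p) powr (- alpha)} \<in> sets (borel \<Otimes>\<^sub>M (borel :: real measure) :: ((real\<times>real)\<times>real) measure)"
    by (simp add: pred_def)
  moreover have "{p \<in> space (borel \<Otimes>\<^sub>M borel). norm (fst p) < D \<and> T \<le> snd p * norm (fst p) powr (- alpha)} = {p::(real\<times>real)\<times>real. fst p \<in> ball 0 D \<and> T \<le> snd p * norm (fst p) powr (- alpha)}"
    by (auto simp: space_pair_measure dist_norm)
  ultimately show ?thesis using eq by simp
qed

lemma setC_meas:
  fixes Q :: "real measure"
  assumes "sets Q = sets borel"
  shows "ball (0::real\<times>real) D \<times> UNIV \<in> sets (lborel \<Otimes>\<^sub>M Q)"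
proof -
  have "UNIV = space Q" using assms by (metis sets_eq_imp_space_eq space_borel)
  then show ?thesis by (metis pair_measureI sets.top sets_lborel open_ball borel_open)
qed

lemma measA:
  fixes Q :: "real measure" and alpha D Tt :: real
  assumes "alpha > 0" "D > 0" "Tt > 0" and Q: "prob_space Q" and sQ: "sets Q = sets borel"
    and ae: "AE g in Q. g \<ge> 0"
  shows "emeasure (lborel \<Otimes>\<^sub>M Q) {p::(real\<times>real)\<times>real. fst p \<in> ball 0 D \<and> Tt * D powr (- alpha) \<le> snd p * norm (fst p) powr (- alpha)}
     = ennreal (pi * D^2 * (\<integral>g. min 1 (Tt powr (- 2 / alpha) * g powr (2 / alpha)) \<partial>Q))"
proof -
  interpret Q: prob_space Q by fact
  interpret pair_sigma_finite "lborel :: (real\<times>real) measure" Q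
    by (simp add: pair_sigma_finite_def Q.sigma_finite_measure_axioms lborel.sigma_finite_measure_axioms)
  let ?A = "{p::(real\<times>real)\<times>real. fst p \<in> ball 0 D \<and> Tt * D powr (- alpha) \<le> snd p * norm (fst p) powr (- alpha)}"
  let ?h = "\<lambda>g::real. min 1 (Tt powr (- 2 / alpha) * g powr (2 / alpha))"
  have hm: "?h \<in> borel_measurable Q"
    by (subst measurable_cong_sets[OF sQ refl]) measurable
  have hint: "integrable Q ?h"
    proof (rule Q.integrable_const_bound[where B=1])
    show "AE g in Q. norm (?h g) \<le> 1"
    proof (rule AE_I2)
      fix g :: real
      have aux: "norm (min 1 y) \<le> (1::real)" if "y \<ge> 0" for y :: real using that by (simp add: min_def)
      show "norm (?h g) \<le> 1" by (rule aux) simp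
    qed
  qed (rule hm)
  have "emeasure (lborel \<Otimes>\<^sub>M Q) ?A = (\<integral>\<^sup>+g. emeasure lborel ((\<lambda>x. (x, g)) -` ?A) \<partial>Q)"
    by (rule emeasure_pair_measure_alt2) (rule setA_meas[OF sQ])
  also have "\<dots> = (\<integral>\<^sup>+g. ennreal (pi * D^2) * ennreal (?h g) \<partial>Q)"
  proof (rule nn_integral_cong_AE)
    show "AE g in Q. emeasure lborel ((\<lambda>x. (x, g)) -` ?A) = ennreal (pi * D^2) * ennreal (?h g)"
      using ae
    proof eventually_elim
      case (elim g)
      have "(\<lambda>x. (x, g)) -` ?A = {x::real\<times>real. x \<in> ball 0 D \<and> Tt * D powr (- alpha) \<le> g * norm x powr (- alpha)}"
        by auto
      then show ?case using area[OF assms(1,2,3) elim] by (simp add: ennreal_mult)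
    qed
  qed
  also have "\<dots> = ennreal (pi * D^2) * (\<integral>\<^sup>+g. ennreal (?h g) \<partial>Q)"
    by (rule nn_integral_cmult) (rule measurable_compose[OF hm], measurable)
  also have "(\<integral>\<^sup>+g. ennreal (?h g) \<partial>Q) = ennreal (\<integral>g. ?h g \<partial>Q)"
    by (rule nn_integral_eq_integral[OF hint]) simp
  finally show ?thesis by (simp add: ennreal_mult)
qed


lemma measC:
  fixes Q :: "real measure" and D :: real
  assumes "D > 0" and Q: "prob_space Q" and sQ: "sets Q = sets borel"
  shows "emeasure (lborel \<Otimes>\<^sub>M Q) (ball (0::real\<times>real) D \<times> UNIV) = ennreal (pi * D^2)"
proof -
  interpret Q: prob_space Q by fact
  interpret pair_sigma_finite "lborel :: (real\<times>real) measure" Q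
    by (simp add: pair_sigma_finite_def Q.sigma_finite_measure_axioms lborel.sigma_finite_measure_axioms)
  have U: "UNIV = space Q" using sQ by (metis sets_eq_imp_space_eq space_borel)
  have "emeasure (lborel \<Otimes>\<^sub>M Q) (ball (0::real\<times>real) D \<times> space Q) = emeasure lborel (ball (0::real\<times>real) D) * emeasure Q (space Q)"
    by (rule Q.emeasure_pair_measure_Times) auto
  moreover have "emeasure Q UNIV = 1" using U Q.emeasure_space_1 by simp
  ultimately show ?thesis using assms by (simp add: U[symmetric] emeasure_ball unit_ball_vol_2 power2_eq_square)
qed



lemma part1:
  fixes M :: "'w measure" and Psi :: "'w \<Rightarrow> ((real \<times> real) \<times> real) set"
    and lam alpha D Tt :: real and Q :: "real measure"
  assumes lam: "lam > 0" and al: "alpha > 2" and D: "D > 0" and Tt: "Tt > 0"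
    and Q: "prob_space Q" and sQ: "sets Q = sets borel"
    and ae: "AE g in Q. g \<ge> 0"
    and ppp: "marked_ppp M Psi lam Q"
  shows "saving M Psi D alpha (Tt * D powr (- alpha))
           = 1 - (\<integral>g. min 1 (Tt powr (- 2 / alpha) * g powr (2 / alpha)) \<partial>Q)"
proof -
  define T where "T = Tt * D powr (- alpha)"
  define A where "A = {p::(real\<times>real)\<times>real. fst p \<in> ball 0 D \<and> T \<le> snd p * norm (fst p) powr (- alpha)}"
  define C where "C = ball (0::real\<times>real) D \<times> (UNIV :: real set)"
  define B where "B = C - A"
  define I where "I = (\<integral>g. min 1 (Tt powr (- 2 / alpha) * g powr (2 / alpha)) \<partial>Q)"
  have P: "prob_space M"
    and lf: "\<And>\<omega> B. \<omega> \<in> space M \<Longrightarrow> bounded B \<Longrightarrow> finite (Psi \<omega> \<inter> (B \<times> UNIV))"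
    and ax2: "\<And>A. A \<in> sets (lborel \<Otimes>\<^sub>M Q) \<Longrightarrow> bounded (fst ` A) \<Longrightarrow>
        (\<lambda>\<omega>. card (Psi \<omega> \<inter> A)) \<in> measurable M (count_space UNIV) \<and>
        (\<forall>k::nat. measure M {\<omega>\<in>space M. card (Psi \<omega> \<inter> A) = k} =
           (lam * measure (lborel \<Otimes>\<^sub>M Q) A) ^ k / fact k
             * exp (- (lam * measure (lborel \<Otimes>\<^sub>M Q) A)))"
    and ax3: "\<And>(I::nat set) F. finite I \<Longrightarrow>
        (\<forall>i\<in>I. F i \<in> sets (lborel \<Otimes>\<^sub>M Q) \<and> bounded (fst ` F i)) \<Longrightarrow>
        disjoint_family_on F I \<Longrightarrow>
        prob_space.indep_vars M (\<lambda>_. count_space UNIV) (\<lambda>i \<omega>. card (Psi \<omega> \<inter> F i)) I"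
    using ppp unfolding marked_ppp_def by blast+
  interpret prob_space M by (rule P)
  have Am: "A \<in> sets (lborel \<Otimes>\<^sub>M Q)" unfolding A_def by (rule setA_meas[OF sQ])
  have Cm: "C \<in> sets (lborel \<Otimes>\<^sub>M Q)" unfolding C_def by (rule setC_meas[OF sQ])
  have Bm: "B \<in> sets (lborel \<Otimes>\<^sub>M Q)" unfolding B_def using Am Cm by auto
  have Ab: "bounded (fst ` A)" by (rule bounded_subset[OF bounded_ball[of 0 D]]) (auto simp: A_def)
  have Bb: "bounded (fst ` B)" by (rule bounded_subset[OF bounded_ball[of 0 D]]) (auto simp: B_def C_def)
  have AC: "A \<subseteq> C" by (auto simp: A_def C_def)
  have Ipos: "I \<ge> 0" unfolding I_def by (rule Bochner_Integration.integral_nonneg) simp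
  have muA: "measure (lborel \<Otimes>\<^sub>M Q) A = pi * D^2 * I"
    using measA[OF _ D Tt Q sQ ae, of alpha] al Ipos unfolding A_def T_def I_def
    by (simp add: measure_def)
  have emC: "emeasure (lborel \<Otimes>\<^sub>M Q) C = ennreal (pi * D^2)"
    unfolding C_def by (rule measC[OF D Q sQ])
  then have muC: "measure (lborel \<Otimes>\<^sub>M Q) C = pi * D^2" by (simp add: measure_def)
  have muB: "measure (lborel \<Otimes>\<^sub>M Q) B = pi * D^2 - pi * D^2 * I"
    unfolding B_def using emC Am Cm AC muA muC by (subst measure_Diff) auto
  define a where "a = lam * measure (lborel \<Otimes>\<^sub>M Q) A"
  define b where "b = lam * measure (lborel \<Otimes>\<^sub>M Q) B"
  have a0: "a \<ge> 0" and b0: "b \<ge> 0" using lam by (auto simp: a_def b_def)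
  have abs: "a + b = lam * (pi * D^2)" by (simp add: a_def b_def muA muB algebra_simps)
  have ab: "a + b > 0" using lam D by (simp add: abs)
  have aI: "a / (a + b) = I"
  proof -
    have "a / (a + b) = (lam * (pi * D^2 * I)) / (lam * (pi * D^2))" by (subst abs) (simp only: a_def muA)
    also have "\<dots> = I" using lam D by simp
    finally show ?thesis .
  qed
  define X where "X = (\<lambda>\<omega>. card (Psi \<omega> \<inter> A))"
  define Y where "Y = (\<lambda>\<omega>. card (Psi \<omega> \<inter> B))"
  have Xm: "X \<in> measurable M (count_space UNIV)" and pX: "\<And>n. measure M {\<omega>\<in>space M. X \<omega> = n} = ppois a n"
    using ax2[OF Am Ab] by (auto simp: X_def ppois_def a_def)
  have Ym: "Y \<in> measurable M (count_space UNIV)" and pY: "\<And>n. measure M {\<omega>\<in>space M. Y \<omega> = n} = ppois b n"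
    using ax2[OF Bm Bb] by (auto simp: Y_def ppois_def b_def)
  define F where "F i = (if i = (0::nat) then A else B)" for i
  have iv: "indep_vars (\<lambda>_. count_space UNIV) (\<lambda>i \<omega>. card (Psi \<omega> \<inter> F i)) {0,1}"
  proof (rule ax3)
    show "\<forall>i\<in>{0,1}. F i \<in> sets (lborel \<Otimes>\<^sub>M Q) \<and> bounded (fst ` F i)"
      using Am Bm Ab Bb by (auto simp: F_def)
    show "disjoint_family_on F {0,1}"
      by (auto simp: disjoint_family_on_def F_def B_def)
  qed simp
  have ind: "measure M {\<omega>\<in>space M. X \<omega> = n \<and> Y \<omega> = m}
        = measure M {\<omega>\<in>space M. X \<omega> = n} * measure M {\<omega>\<in>space M. Y \<omega> = m}" for n m
  proof -
    let ?G = "\<lambda>i::nat. if i = 0 then {n} else {m}"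
    have "prob (\<Inter>i\<in>{0,1}. (\<lambda>\<omega>. card (Psi \<omega> \<inter> F i)) -` ?G i \<inter> space M)
        = (\<Prod>i\<in>{0,1}. prob ((\<lambda>\<omega>. card (Psi \<omega> \<inter> F i)) -` ?G i \<inter> space M))"
      by (rule indep_varsD[OF iv]) auto
    moreover have "(\<Inter>i\<in>{0,1}. (\<lambda>\<omega>. card (Psi \<omega> \<inter> F i)) -` ?G i \<inter> space M) = {\<omega>\<in>space M. X \<omega> = n \<and> Y \<omega> = m}"
      by (auto simp: F_def X_def Y_def)
    moreover have "(\<lambda>\<omega>. card (Psi \<omega> \<inter> F 0)) -` ?G 0 \<inter> space M = {\<omega>\<in>space M. X \<omega> = n}"
      by (auto simp: F_def X_def)
    moreover have "(\<lambda>\<omega>. card (Psi \<omega> \<inter> F 1)) -` ?G 1 \<inter> space M = {\<omega>\<in>space M. Y \<omega> = m}"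
      by (auto simp: F_def Y_def)
    ultimately show ?thesis by simp
  qed
  have KXY: "count_K Psi D \<omega> = X \<omega> + Y \<omega>" if w: "\<omega> \<in> space M" for \<omega>
  proof -
    have fin: "finite (Psi \<omega> \<inter> C)" unfolding C_def by (rule lf[OF w]) simp
    have "{p \<in> Psi \<omega>. fst p \<in> ball 0 D} = (Psi \<omega> \<inter> A) \<union> (Psi \<omega> \<inter> B)"
      using AC by (auto simp: B_def C_def)
    moreover have "card ((Psi \<omega> \<inter> A) \<union> (Psi \<omega> \<inter> B)) = card (Psi \<omega> \<inter> A) + card (Psi \<omega> \<inter> B)"
    proof (rule card_Un_disjoint)
      show "finite (Psi \<omega> \<inter> A)" by (rule finite_subset[OF _ fin]) (use AC in auto)
      show "finite (Psi \<omega> \<inter> B)" by (rule finite_subset[OF _ fin]) (auto simp: B_def)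
    qed (auto simp: B_def)
    ultimately show ?thesis by (simp add: count_K_def X_def Y_def)
  qed
  have NX: "count_N Psi D alpha T \<omega> = X \<omega>" for \<omega>
  proof -
    have "{p \<in> Psi \<omega>. fst p \<in> ball 0 D \<and> snd p * norm (fst p) powr (- alpha) \<ge> T} = Psi \<omega> \<inter> A"
      by (auto simp: A_def)
    then show ?thesis by (simp add: count_N_def X_def)
  qed
  have integrand: "(if count_K Psi D \<omega> \<ge> 1 then real (count_N Psi D alpha T \<omega>) / real (count_K Psi D \<omega>) else 0)
       = real (X \<omega>) / real (X \<omega> + Y \<omega>)" if "\<omega> \<in> space M" for \<omega>
    using KXY[OF that] NX[of \<omega>] by auto
  note [measurable] = Xm Ym
  have "(\<integral>\<omega>. (if count_K Psi D \<omega> \<ge> 1 then real (count_N Psi D alpha T \<omega>) / real (count_K Psi D \<omega>) else 0) \<partial>M)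
      = (\<integral>\<omega>. real (X \<omega>) / real (X \<omega> + Y \<omega>) \<partial>M)"
    by (intro Bochner_Integration.integral_cong refl integrand)
  also have "\<dots> = enn2real (\<integral>\<^sup>+\<omega>. ennreal (real (X \<omega>) / real (X \<omega> + Y \<omega>)) \<partial>M)"
    by (rule integral_eq_nn_integral) auto
  also have "\<dots> = a / (a + b) * (1 - exp (- (a + b)))"
  proof -
    have "exp (- (a + b)) \<le> 1" using ab by simp
    then have nn: "0 \<le> a / (a + b) * (1 - exp (- (a + b)))" using a0 ab by simp
    show ?thesis by (simp only: pois_ratio[OF P Xm Ym ind pX pY a0 b0 ab] enn2real_ennreal[OF nn])
  qed
  finally have int: "(\<integral>\<omega>. (if count_K Psi D \<omega> \<ge> 1 then real (count_N Psi D alpha T \<omega>) / real (count_K Psi D \<omega>) else 0) \<partial>M)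
      = a / (a + b) * (1 - exp (- (a + b)))" .
  define Z where "Z = {\<omega>\<in>space M. X \<omega> = 0 \<and> Y \<omega> = 0}"
  have Zs: "Z \<in> sets M" unfolding Z_def by measurable
  have "{\<omega>\<in>space M. count_K Psi D \<omega> \<ge> 1} = space M - Z"
    using KXY by (auto simp: Z_def)
  moreover have "prob Z = exp (- a) * exp (- b)"
    unfolding Z_def using ind pX pY by (simp add: ppois_def)
  ultimately have pos: "measure M {\<omega>\<in>space M. count_K Psi D \<omega> \<ge> 1} = 1 - exp (- (a + b))"
    using Zs by (simp add: prob_compl exp_add[symmetric])
  have "exp (- (a + b)) < 1" using ab by simp
  then have nz: "1 - exp (- (a + b)) \<noteq> 0" by simp
  show ?thesis
    unfolding saving_def T_def[symmetric] int pos using nz aI I_def by simp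
qed



lemma pointwise_split:
  fixes alpha Tt x :: real
  assumes al: "alpha > 2" and Tt: "Tt > 0"
  shows "ennreal (exponential_density 1 x) * ennreal (min 1 (Tt powr (- 2 / alpha) * x powr (2 / alpha)))
     = ennreal (Tt powr (- 2 / alpha) * (x powr (2 / alpha) * exp (- x))) * indicator {0<..Tt} x
       + ennreal (exp (- x)) * indicator {Tt<..} x"
proof -
  have b: "2 / alpha > 0" using al by simp
  have cx: "Tt powr (- 2 / alpha) * x powr (2 / alpha) = (x / Tt) powr (2 / alpha)" if "x > 0"
  proof -
    have e: "Tt powr (- 2 / alpha) = inverse (Tt powr (2 / alpha))"
      by (subst minus_divide_left[symmetric]) (rule powr_minus)
    have "(x / Tt) powr (2 / alpha) = x powr (2 / alpha) / Tt powr (2 / alpha)"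
      using that Tt by (intro powr_divide)
    then show ?thesis unfolding e by (simp add: divide_inverse mult.commute)
  qed
  consider "x < 0" | "x = 0" | "0 < x \<and> x \<le> Tt" | "Tt < x" by linarith
  then show ?thesis
  proof cases
    case 1 then show ?thesis using Tt by (simp add: exponential_density_def indicator_def)
  next
    case 2 then show ?thesis using Tt by (simp add: indicator_def)
  next
    case 3
    then have "(x / Tt) powr (2 / alpha) \<le> 1" using Tt b by (intro powr_le1) auto
    then have "min 1 (Tt powr (- 2 / alpha) * x powr (2 / alpha)) = Tt powr (- 2 / alpha) * x powr (2 / alpha)"
      using cx 3 by simp
    then show ?thesis using 3 by (simp add: exponential_density_def indicator_def ennreal_mult[symmetric])
  next
    case 4
    then have "1 \<le> (x / Tt) powr (2 / alpha)" using Tt b by (intro ge_one_powr_ge_zero) auto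
    then have "min 1 (Tt powr (- 2 / alpha) * x powr (2 / alpha)) = 1"
      using cx 4 Tt by simp
    then show ?thesis using 4 Tt by (simp add: exponential_density_def indicator_def)
  qed
qed

lemma tail_exp:
  fixes Tt :: real assumes Tt: "Tt > 0"
  shows "(\<integral>\<^sup>+x. ennreal (exp (- x)) * indicator {Tt<..} x \<partial>lborel) = ennreal (exp (- Tt))"
proof -
  let ?Qe = "density lborel (exponential_density 1)"
  interpret Qe: prob_space ?Qe by (rule prob_space_exponential_density) simp
  have sp: "space ?Qe = UNIV" by simp
  have "emeasure ?Qe {..Tt} = ennreal (1 - exp (- Tt))"
    using emeasure_erlang_density[of 1 0 Tt] Tt by (simp add: erlang_CDF_0)
  moreover have "exp (- Tt) \<le> 1" using Tt by simp
  ultimately have m1: "measure ?Qe {..Tt} = 1 - exp (- Tt)"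
    by (simp add: Qe.emeasure_eq_measure ennreal_inj)
  have "measure ?Qe {Tt<..} = measure ?Qe (space ?Qe - {..Tt})"
    by (rule arg_cong[where f="measure ?Qe"]) auto
  also have "\<dots> = 1 - measure ?Qe {..Tt}" by (rule Qe.prob_compl) simp
  finally have m2: "measure ?Qe {Tt<..} = exp (- Tt)" using m1 by simp
  have "emeasure ?Qe {Tt<..} = (\<integral>\<^sup>+x. ennreal (exponential_density 1 x) * indicator {Tt<..} x \<partial>lborel)"
    by (rule emeasure_density) auto
  also have "\<dots> = (\<integral>\<^sup>+x. ennreal (exp (- x)) * indicator {Tt<..} x \<partial>lborel)"
    by (rule nn_integral_cong) (use Tt in \<open>auto simp: exponential_density_def indicator_def\<close>)
  finally show ?thesis using m2 by (simp add: Qe.emeasure_eq_measure)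
qed

lemma gamma_part:
  fixes alpha Tt :: real
  assumes al: "alpha > 2" and Tt: "Tt > 0"
  shows "(\<integral>\<^sup>+x. ennreal (x powr (2 / alpha) * exp (- x)) * indicator {0<..Tt} x \<partial>lborel)
      = ennreal (lower_inc_gamma (1 + 2 / alpha) Tt)"
proof -
  let ?f = "\<lambda>x::real. x powr (2 / alpha) * exp (- x)"
  have b: "2 / alpha > 0" using al by simp
  have g: "lower_inc_gamma (1 + 2 / alpha) Tt = (\<integral>x. indicator {0<..<Tt} x *\<^sub>R ?f x \<partial>lborel)"
    using Tt by (simp add: lower_inc_gamma_def interval_lebesgue_integral_def set_lebesgue_integral_def zero_ereal_def)
  also have "\<dots> = enn2real (\<integral>\<^sup>+x. ennreal (indicator {0<..<Tt} x *\<^sub>R ?f x) \<partial>lborel)"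
    by (rule integral_eq_nn_integral) auto
  also have "(\<integral>\<^sup>+x. ennreal (indicator {0<..<Tt} x *\<^sub>R ?f x) \<partial>lborel)
      = (\<integral>\<^sup>+x. ennreal (?f x) * indicator {0<..Tt} x \<partial>lborel)"
    by (intro nn_integral_cong_AE eventually_mono[OF AE_lborel_singleton[of Tt]])
       (auto simp: indicator_def)
  finally have eq: "lower_inc_gamma (1 + 2 / alpha) Tt = enn2real (\<integral>\<^sup>+x. ennreal (?f x) * indicator {0<..Tt} x \<partial>lborel)" .
  have "(\<integral>\<^sup>+x. ennreal (?f x) * indicator {0<..Tt} x \<partial>lborel) \<le> (\<integral>\<^sup>+x. ennreal (Tt powr (2 / alpha)) * indicator {0..Tt} x \<partial>lborel)"
  proof (rule nn_integral_mono)
    fix x :: real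
    show "ennreal (?f x) * indicator {0<..Tt} x \<le> ennreal (Tt powr (2 / alpha)) * indicator {0..Tt} x"
    proof (cases "0 < x \<and> x \<le> Tt")
      case True
      have "x powr (2 / alpha) \<le> Tt powr (2 / alpha)" using True b by (intro powr_mono2) auto
      moreover have "exp (- x) \<le> 1" using True by simp
      ultimately have "?f x \<le> Tt powr (2 / alpha)"
        by (metis mult_left_le mult_le_cancel_right1 powr_ge_zero order_trans exp_gt_zero less_eq_real_def)
      then show ?thesis using True by (simp add: indicator_def)
    qed (auto simp: indicator_def)
  qed
  also have "\<dots> = ennreal (Tt powr (2 / alpha)) * emeasure lborel {0..Tt}"
    by (rule nn_integral_cmult_indicator) simp
  also have "\<dots> = ennreal (Tt powr (2 / alpha) * Tt)" using Tt by (simp add: ennreal_mult)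
  also have "\<dots> < \<top>" by simp
  finally have fin: "(\<integral>\<^sup>+x. ennreal (?f x) * indicator {0<..Tt} x \<partial>lborel) < \<top>" .
  show ?thesis unfolding eq using fin by (rule ennreal_enn2real[symmetric])
qed

lemma gamma_nonneg:
  fixes alpha Tt :: real
  assumes al: "alpha > 2" and Tt: "Tt > 0"
  shows "lower_inc_gamma (1 + 2 / alpha) Tt \<ge> 0"
proof -
  have "ennreal (lower_inc_gamma (1 + 2 / alpha) Tt) = (\<integral>\<^sup>+x. ennreal (x powr (2 / alpha) * exp (- x)) * indicator {0<..Tt} x \<partial>lborel)"
    by (rule gamma_part[OF al Tt, symmetric])
  have "lower_inc_gamma (1 + 2 / alpha) Tt = (\<integral>x. indicator {0<..<Tt} x *\<^sub>R (x powr (2 / alpha) * exp (- x)) \<partial>lborel)"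
    using Tt by (simp add: lower_inc_gamma_def interval_lebesgue_integral_def set_lebesgue_integral_def zero_ereal_def)
  also have "\<dots> \<ge> 0" by (rule Bochner_Integration.integral_nonneg) (simp add: indicator_def)
  finally show ?thesis .
qed

lemma part2:
  fixes alpha Tt :: real
  assumes al: "alpha > 2" and Tt: "Tt > 0"
  shows "(\<integral>g. min 1 (Tt powr (- 2 / alpha) * g powr (2 / alpha)) \<partial>density lborel (exponential_density 1))
     = exp (- Tt) + Tt powr (- 2 / alpha) * lower_inc_gamma (1 + 2 / alpha) Tt"
proof -
  let ?Qe = "density lborel (exponential_density 1)"
  let ?h = "\<lambda>g::real. min 1 (Tt powr (- 2 / alpha) * g powr (2 / alpha))"
  let ?c = "Tt powr (- 2 / alpha)"
  have hm: "?h \<in> borel_measurable ?Qe" by simp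
  have "(\<integral>g. ?h g \<partial>?Qe) = enn2real (\<integral>\<^sup>+g. ennreal (?h g) \<partial>?Qe)"
    by (rule integral_eq_nn_integral) auto
  also have "(\<integral>\<^sup>+g. ennreal (?h g) \<partial>?Qe) = (\<integral>\<^sup>+x. ennreal (exponential_density 1 x) * ennreal (?h x) \<partial>lborel)"
    by (rule nn_integral_density) auto
  also have "\<dots> = (\<integral>\<^sup>+x. ennreal (?c * (x powr (2 / alpha) * exp (- x))) * indicator {0<..Tt} x
       + ennreal (exp (- x)) * indicator {Tt<..} x \<partial>lborel)"
    by (rule nn_integral_cong) (rule pointwise_split[OF al Tt])
  also have "\<dots> = (\<integral>\<^sup>+x. ennreal (?c * (x powr (2 / alpha) * exp (- x))) * indicator {0<..Tt} x \<partial>lborel)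
       + (\<integral>\<^sup>+x. ennreal (exp (- x)) * indicator {Tt<..} x \<partial>lborel)"
    by (rule nn_integral_add) auto
  also have "(\<integral>\<^sup>+x. ennreal (?c * (x powr (2 / alpha) * exp (- x))) * indicator {0<..Tt} x \<partial>lborel)
      = ennreal ?c * (\<integral>\<^sup>+x. ennreal (x powr (2 / alpha) * exp (- x)) * indicator {0<..Tt} x \<partial>lborel)"
    by (subst nn_integral_cmult[symmetric]) (auto simp: ennreal_mult mult.assoc)
  also have "\<dots> = ennreal (?c * lower_inc_gamma (1 + 2 / alpha) Tt)"
    unfolding gamma_part[OF al Tt] using gamma_nonneg[OF al Tt] by (simp add: ennreal_mult'')
  also have "(\<integral>\<^sup>+x. ennreal (exp (- x)) * indicator {Tt<..} x \<partial>lborel) = ennreal (exp (- Tt))"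
    by (rule tail_exp[OF Tt])
  finally have "(\<integral>g. ?h g \<partial>?Qe) = enn2real (ennreal (?c * lower_inc_gamma (1 + 2 / alpha) Tt) + ennreal (exp (- Tt)))" .
  moreover have "lower_inc_gamma (1 + 2 / alpha) Tt \<ge> 0" by (rule gamma_nonneg[OF al Tt])
  ultimately show ?thesis by (simp add: enn2real_plus del: ennreal_plus)
qed


theorem mainTheorem6:
  fixes M :: "'w measure" and Psi :: "'w \<Rightarrow> ((real \<times> real) \<times> real) set"
    and lam alpha D Tt :: real and Q :: "real measure"
  assumes "lam > 0" and "alpha > 2" and "D > 0" and "Tt > 0"
    and "prob_space Q" and "sets Q = sets borel"
    and "AE g in Q. g \<ge> 0" and "integrable Q (\<lambda>g. g)" and "(\<integral>g. g \<partial>Q) = 1"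
    and "marked_ppp M Psi lam Q"
  shows "saving M Psi D alpha (Tt * D powr (- alpha))
           = 1 - (\<integral>g. min 1 (Tt powr (- 2 / alpha) * g powr (2 / alpha)) \<partial>Q)
       \<and> (Q = density lborel (exponential_density 1) \<longrightarrow>
           saving M Psi D alpha (Tt * D powr (- alpha))
           = 1 - exp (- Tt) - Tt powr (- 2 / alpha) * lower_inc_gamma (1 + 2 / alpha) Tt)"
proof -
  have p1: "saving M Psi D alpha (Tt * D powr (- alpha))
           = 1 - (\<integral>g. min 1 (Tt powr (- 2 / alpha) * g powr (2 / alpha)) \<partial>Q)"
    by (rule part1) (use assms in auto)
  show ?thesis
  proof (intro conjI impI)
    show "saving M Psi D alpha (Tt * D powr (- alpha))
           = 1 - (\<integral>g. min 1 (Tt powr (- 2 / alpha) * g powr (2 / alpha)) \<partial>Q)" by (rule p1)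
  next
    assume "Q = density lborel (exponential_density 1)"
    then show "saving M Psi D alpha (Tt * D powr (- alpha))
           = 1 - exp (- Tt) - Tt powr (- 2 / alpha) * lower_inc_gamma (1 + 2 / alpha) Tt"
      using p1 part2[OF assms(2) assms(4)] by simp
  qed
qed

end
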